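(* For any variety $\mathcal{V}$ of $\Omega$-algebras, the variety $\mathcal{V}^p$ is generated by the quasivariety $\mathcal{V}\circ\mathcal{S}$, i.e. $\mathcal{V}^p$ is the smallest variety containing $\mathcal{V}\circ\mathcal{S}$.
   Context: Standing conventions: $\Omega$-algebras are of a plural similarity type (no nullary operation symbols, at least one operation symbol of arity $\ge2$). $T_n$ is the set of $\Omega$-terms in $x_1,\dots,x_n$ in which all $n$ variables occur. An identity is regular if the same variables occur on both sides. $\mathcal{S}$ is the variety of $\Omega$-algebras satisfying all regular identities. $\mathcal{V}\circ\mathcal{S}$ is the class of $\Omega$-algebras $A$ having a congruence $\theta$ with $A/\theta\in\mathcal{S}$ and every $\theta$-class (a subalgebra) in $\mathcal{V}$. Prolongation: for an identity $\sigma$ of the form $u(y_1,\dots,y_n)=v(y_1,\dots,y_n)$ and $m\ge1$, $\sigma^p_m$ is the set of identities $u(r_1,\dots,r_n)=v(r_1,\dots,r_n)$ obtained by substituting $r_i(x_1,\dots,x_m)$ for $y_i$, with $r_i$ ranging over $T_m$; $\sigma^p=\bigcup_m\sigma^p_m$; $\Sigma^p=\bigcup_{\sigma\in\Sigma}\sigma^p$. $\mathcal{V}^p$ is the variety defined by $\mathrm{Id}(\mathcal{V})^p$, where $\mathrm{Id}(\mathcal{V})$ is the set of all identities holding in $\mathcal{V}$. *)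

theory Defs
  imports Main
begin

datatype ('f, 'v) trm = Var 'v | App 'f "('f, 'v) trm list"

fun wf_trm :: "('f \<Rightarrow> nat) \<Rightarrow> ('f, 'v) trm \<Rightarrow> bool" where
  "wf_trm ar (Var x) = True"
| "wf_trm ar (App f ts) = (length ts = ar f \<and> (\<forall>t \<in> set ts. wf_trm ar t))"

fun vars :: "('f, 'v) trm \<Rightarrow> 'v set" where
  "vars (Var x) = {x}"
| "vars (App f ts) = (\<Union>t \<in> set ts. vars t)"

fun subst :: "('v \<Rightarrow> ('f, 'w) trm) \<Rightarrow> ('f, 'v) trm \<Rightarrow> ('f, 'w) trm" where
  "subst s (Var x) = s x"
| "subst s (App f ts) = App f (map (subst s) ts)"

definition plural :: "('f \<Rightarrow> nat) \<Rightarrow> bool" where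
  "plural ar \<longleftrightarrow> (\<forall>f. 1 \<le> ar f) \<and> (\<exists>f. 2 \<le> ar f)"

definition T :: "('f \<Rightarrow> nat) \<Rightarrow> nat \<Rightarrow> ('f, nat) trm set" where
  "T ar m = {t. wf_trm ar t \<and> vars t = {1..m}}"

type_synonym 'f ident = "('f, nat) trm \<times> ('f, nat) trm"

definition wf_ident :: "('f \<Rightarrow> nat) \<Rightarrow> 'f ident \<Rightarrow> bool" where
  "wf_ident ar e \<longleftrightarrow> wf_trm ar (fst e) \<and> wf_trm ar (snd e)"

definition regular :: "'f ident \<Rightarrow> bool" where
  "regular e \<longleftrightarrow> vars (fst e) = vars (snd e)"

definition is_alg :: "('f \<Rightarrow> nat) \<Rightarrow> 'a set \<Rightarrow> ('f \<Rightarrow> 'a list \<Rightarrow> 'a) \<Rightarrow> bool" where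
  "is_alg ar A F \<longleftrightarrow> A \<noteq> {} \<and>
     (\<forall>f xs. length xs = ar f \<and> set xs \<subseteq> A \<longrightarrow> F f xs \<in> A)"

fun eval :: "('f \<Rightarrow> 'a list \<Rightarrow> 'a) \<Rightarrow> ('v \<Rightarrow> 'a) \<Rightarrow> ('f, 'v) trm \<Rightarrow> 'a" where
  "eval F a (Var x) = a x"
| "eval F a (App f ts) = F f (map (eval F a) ts)"

definition satisfies :: "'a set \<Rightarrow> ('f \<Rightarrow> 'a list \<Rightarrow> 'a) \<Rightarrow> 'f ident \<Rightarrow> bool" where
  "satisfies A F e \<longleftrightarrow> (\<forall>a. (\<forall>i. a i \<in> A) \<longrightarrow> eval F a (fst e) = eval F a (snd e))"

definition Mod :: "('f \<Rightarrow> nat) \<Rightarrow> 'f ident set \<Rightarrow> 'a set \<Rightarrow> ('f \<Rightarrow> 'a list \<Rightarrow> 'a) \<Rightarrow> bool" where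
  "Mod ar \<Sigma> A F \<longleftrightarrow> is_alg ar A F \<and> (\<forall>e \<in> \<Sigma>. satisfies A F e)"

definition in_S :: "('f \<Rightarrow> nat) \<Rightarrow> 'a set \<Rightarrow> ('f \<Rightarrow> 'a list \<Rightarrow> 'a) \<Rightarrow> bool" where
  "in_S ar A F \<longleftrightarrow> Mod ar {e. wf_ident ar e \<and> regular e} A F"

definition congruence :: "('f \<Rightarrow> nat) \<Rightarrow> 'a set \<Rightarrow> ('f \<Rightarrow> 'a list \<Rightarrow> 'a) \<Rightarrow> 'a rel \<Rightarrow> bool" where
  "congruence ar A F \<theta> \<longleftrightarrow> equiv A \<theta> \<and>
     (\<forall>f xs ys. length xs = ar f \<and> length ys = ar f \<and> set xs \<subseteq> A \<and> set ys \<subseteq> A \<and>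
        (\<forall>i < ar f. (xs ! i, ys ! i) \<in> \<theta>) \<longrightarrow> (F f xs, F f ys) \<in> \<theta>)"

definition quot_ops :: "('f \<Rightarrow> 'a list \<Rightarrow> 'a) \<Rightarrow> 'a rel \<Rightarrow> 'f \<Rightarrow> 'a set list \<Rightarrow> 'a set" where
  "quot_ops F \<theta> f Xs = \<theta> `` {F f (map (\<lambda>X. SOME x. x \<in> X) Xs)}"

text \<open>The class V o S, for V = Mod Sigma.\<close>
definition in_VoS :: "('f \<Rightarrow> nat) \<Rightarrow> 'f ident set \<Rightarrow> 'a set \<Rightarrow> ('f \<Rightarrow> 'a list \<Rightarrow> 'a) \<Rightarrow> bool" where
  "in_VoS ar \<Sigma> A F \<longleftrightarrow> is_alg ar A F \<and>
     (\<exists>\<theta>. congruence ar A F \<theta> \<and> in_S ar (A // \<theta>) (quot_ops F \<theta>) \<and>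
          (\<forall>X \<in> A // \<theta>. Mod ar \<Sigma> X F))"

text \<open>Validity is tested on all algebras whose carrier
  lies in the type of terms ('f, nat) trm, which is large enough (cardinality
  max(|Omega|, aleph_0)) to contain an isomorphic copy of every finitely generated
  algebra, hence to detect failure of every identity in V.\<close>
definition Id_of :: "('f \<Rightarrow> nat) \<Rightarrow> 'f ident set \<Rightarrow> 'f ident set" where
  "Id_of ar \<Sigma> = {e. wf_ident ar e \<and>
      (\<forall>(B :: ('f, nat) trm set) G. Mod ar \<Sigma> B G \<longrightarrow> satisfies B G e)}"

definition prolong_m :: "('f \<Rightarrow> nat) \<Rightarrow> nat \<Rightarrow> 'f ident \<Rightarrow> 'f ident set" where
  "prolong_m ar m e = {(subst s (fst e), subst s (snd e)) | s.
      \<forall>y \<in> vars (fst e) \<union> vars (snd e). s y \<in> T ar m}"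

definition prolong :: "('f \<Rightarrow> nat) \<Rightarrow> 'f ident \<Rightarrow> 'f ident set" where
  "prolong ar e = (\<Union>m \<in> {m. 1 \<le> m}. prolong_m ar m e)"

definition prolong_set :: "('f \<Rightarrow> nat) \<Rightarrow> 'f ident set \<Rightarrow> 'f ident set" where
  "prolong_set ar \<Sigma> = (\<Union>e \<in> \<Sigma>. prolong ar e)"

definition in_Vp :: "('f \<Rightarrow> nat) \<Rightarrow> 'f ident set \<Rightarrow> 'a set \<Rightarrow> ('f \<Rightarrow> 'a list \<Rightarrow> 'a) \<Rightarrow> bool" where
  "in_Vp ar \<Sigma> A F \<longleftrightarrow> Mod ar (prolong_set ar (Id_of ar \<Sigma>)) A F"

end

theory Submission
  imports Defs
begin

lemma eval_subst: "eval F a (subst s t) = eval F (\<lambda>i. eval F a (s i)) t"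
proof (induction t)
  case (App f ts)
  have "map (eval F a \<circ> subst s) ts = map (eval F (\<lambda>i. eval F a (s i))) ts"
    using App by (auto intro: map_cong)
  then show ?case by (metis eval.simps(2) subst.simps(2) map_map)
qed simp

lemma eval_cong: "(\<forall>i\<in>vars t. a i = a' i) \<Longrightarrow> eval F a t = eval F a' t"
proof (induction t)
  case (App f ts)
  have "map (eval F a) ts = map (eval F a') ts"
    using App by (auto intro: map_cong)
  then show ?case by (metis eval.simps(2))
qed simp

lemma subst_cong: "(\<forall>i\<in>vars t. s i = s' i) \<Longrightarrow> subst s t = subst s' t"
  by (induction t) (auto intro!: map_cong)

lemma subst_subst: "subst s (subst s' t) = subst (\<lambda>x. subst s (s' x)) t"
  by (induction t) auto

lemma subst_Var: "subst Var t = t"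
  by (induction t) (auto intro: map_idI)

lemma vars_subst: "vars (subst s t) = (\<Union>i\<in>vars t. vars (s i))"
  by (induction t) auto

lemma wf_subst: "wf_trm ar t \<Longrightarrow> (\<forall>i. wf_trm ar (s i)) \<Longrightarrow> wf_trm ar (subst s t)"
  by (induction t) auto

lemma finite_vars: "finite (vars t)"
  by (induction t) auto

lemma vars_nonempty: "plural ar \<Longrightarrow> wf_trm ar t \<Longrightarrow> vars t \<noteq> {}"
proof (induction t)
  case (Var x) then show ?case by simp
next
  case (App f ts)
  have "1 \<le> ar f" using App.prems unfolding plural_def by auto
  then have "ts \<noteq> []" using App.prems by auto
  then obtain t where t: "t \<in> set ts" by (cases ts) auto
  then have "vars t \<noteq> {}" using App by auto
  then show ?case using t by auto
qed

lemma eval_closed: "is_alg ar A F \<Longrightarrow> \<forall>i. a i \<in> A \<Longrightarrow> wf_trm ar t \<Longrightarrow> eval F a t \<in> A"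
proof (induction t)
  case (Var x) then show ?case by simp
next
  case (App f ts)
  have "set (map (eval F a) ts) \<subseteq> A" using App by auto
  then show ?case using App.prems unfolding is_alg_def by auto
qed

lemma quot_eval:
  assumes alg: "is_alg ar A F" and cg: "congruence ar A F \<theta>" and a: "\<forall>i. a i \<in> A"
    and "wf_trm ar t"
  shows "eval (quot_ops F \<theta>) (\<lambda>i. \<theta>``{a i}) t = \<theta>``{eval F a t}"
  using assms(4)
proof (induction t)
  case (Var x) then show ?case by simp
next
  case (App f ts)
  have eq: "equiv A \<theta>" using cg unfolding congruence_def by auto
  have ev: "eval F a t \<in> A" if "t \<in> set ts" for t
    using eval_closed[OF alg a] App.prems that by auto
  have "map (eval (quot_ops F \<theta>) (\<lambda>i. \<theta>``{a i})) ts = map (\<lambda>t. \<theta>``{eval F a t}) ts"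
    using App by (auto intro: map_cong)
  then have "eval (quot_ops F \<theta>) (\<lambda>i. \<theta>``{a i}) (App f ts)
     = quot_ops F \<theta> f (map (\<lambda>t. \<theta>``{eval F a t}) ts)"
    by (metis eval.simps(2))
  also have "\<dots> = \<theta>``{F f (map (\<lambda>t. SOME x. x \<in> \<theta>``{eval F a t}) ts)}"
    unfolding quot_ops_def map_map comp_def by (rule refl)
  finally have lhs: "eval (quot_ops F \<theta>) (\<lambda>i. \<theta>``{a i}) (App f ts)
     = \<theta>``{F f (map (\<lambda>t. SOME x. x \<in> \<theta>``{eval F a t}) ts)}" .
  define xs where "xs = map (\<lambda>t. SOME x. x \<in> \<theta>``{eval F a t}) ts"
  define ys where "ys = map (eval F a) ts"
  have rel: "(SOME x. x \<in> \<theta>``{eval F a t}) \<in> A \<and> ((SOME x. x \<in> \<theta>``{eval F a t}), eval F a t) \<in> \<theta>"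
    if "t \<in> set ts" for t
  proof -
    have "eval F a t \<in> \<theta>``{eval F a t}" using ev[OF that] eq equiv_class_self by metis
    then have "(SOME x. x \<in> \<theta>``{eval F a t}) \<in> \<theta>``{eval F a t}" by (rule someI)
    then show ?thesis using eq unfolding equiv_def sym_def refl_on_def by blast
  qed
  have len: "length xs = ar f" "length ys = ar f" using App.prems by (auto simp: xs_def ys_def)
  have "set xs \<subseteq> A" using rel by (auto simp: xs_def)
  moreover have "set ys \<subseteq> A" using ev by (auto simp: ys_def)
  moreover have "\<forall>i < ar f. (xs ! i, ys ! i) \<in> \<theta>"
    using rel len by (auto simp: xs_def ys_def)
  ultimately have "(F f xs, F f ys) \<in> \<theta>" using cg len unfolding congruence_def by blast
  then have "\<theta>``{F f xs} = \<theta>``{F f ys}" using eq equiv_class_eq by metis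
  then show ?case using lhs by (simp add: xs_def ys_def)
qed

lemma quot_alg:
  assumes alg: "is_alg ar A F" and cg: "congruence ar A F \<theta>"
  shows "is_alg ar (A // \<theta>) (quot_ops F \<theta>)"
proof -
  have eq: "equiv A \<theta>" using cg unfolding congruence_def by auto
  have ne: "A // \<theta> \<noteq> {}" using alg unfolding is_alg_def quotient_def by auto
  have "quot_ops F \<theta> f Xs \<in> A // \<theta>" if "length Xs = ar f" "set Xs \<subseteq> A // \<theta>" for f Xs
  proof -
    have "(SOME x. x \<in> X) \<in> A" if "X \<in> A // \<theta>" for X
    proof -
      obtain x where "x \<in> A" "X = \<theta>``{x}" using \<open>X \<in> A // \<theta>\<close> by (auto elim: quotientE)
      then have "x \<in> X" using eq equiv_class_self by metis
      then have "(SOME x. x \<in> X) \<in> X" by (rule someI)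
      then show ?thesis using \<open>X \<in> A // \<theta>\<close> eq Union_quotient by blast
    qed
    then have "set (map (\<lambda>X. SOME x. x \<in> X) Xs) \<subseteq> A" using that by auto
    then have "F f (map (\<lambda>X. SOME x. x \<in> X) Xs) \<in> A"
      using alg that unfolding is_alg_def by auto
    then show ?thesis unfolding quot_ops_def by (rule quotientI)
  qed
  then show ?thesis using ne unfolding is_alg_def by blast
qed

lemma quot_sat:
  assumes alg: "is_alg ar A F" and cg: "congruence ar A F \<theta>"
    and wf: "wf_trm ar p" "wf_trm ar q"
    and rel: "\<And>a. \<forall>i. a i \<in> A \<Longrightarrow> (eval F a p, eval F a q) \<in> \<theta>"
  shows "satisfies (A // \<theta>) (quot_ops F \<theta>) (p, q)"
  unfolding satisfies_def
proof (intro allI impI)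
  fix c :: "nat \<Rightarrow> _" assume c: "\<forall>i. c i \<in> A // \<theta>"
  have eq: "equiv A \<theta>" using cg unfolding congruence_def by auto
  define a where "a i = (SOME x. x \<in> A \<and> c i = \<theta>``{x})" for i
  have a: "a i \<in> A \<and> c i = \<theta>``{a i}" for i
  proof -
    from c have "c i \<in> A // \<theta>" by auto
    then have "\<exists>x. x \<in> A \<and> c i = \<theta>``{x}" by (auto elim!: quotientE)
    then show ?thesis unfolding a_def by (rule someI_ex)
  qed
  then have cc: "c = (\<lambda>i. \<theta>``{a i})" by auto
  have aA: "\<forall>i. a i \<in> A" using a by auto
  show "eval (quot_ops F \<theta>) c (fst (p, q)) = eval (quot_ops F \<theta>) c (snd (p, q))"
    unfolding cc using quot_eval[OF alg cg aA wf(1)] quot_eval[OF alg cg aA wf(2)]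
      rel[OF aA] eq equiv_class_eq by fastforce
qed

lemma quot_sat_rev:
  assumes alg: "is_alg ar A F" and cg: "congruence ar A F \<theta>"
    and wf: "wf_trm ar p" "wf_trm ar q"
    and sat: "satisfies (A // \<theta>) (quot_ops F \<theta>) (p, q)"
    and a: "\<forall>i. a i \<in> A"
  shows "(eval F a p, eval F a q) \<in> \<theta>"
proof -
  have eq: "equiv A \<theta>" using cg unfolding congruence_def by auto
  have "\<forall>i. \<theta>``{a i} \<in> A // \<theta>" using a by (auto intro: quotientI)
  then have "eval (quot_ops F \<theta>) (\<lambda>i. \<theta>``{a i}) p = eval (quot_ops F \<theta>) (\<lambda>i. \<theta>``{a i}) q"
    using sat unfolding satisfies_def by auto
  then have "\<theta>``{eval F a p} = \<theta>``{eval F a q}"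
    using quot_eval[OF alg cg a wf(1)] quot_eval[OF alg cg a wf(2)] by simp
  then show ?thesis using eq eval_closed[OF alg a wf(1)] eval_closed[OF alg a wf(2)]
    by (simp add: equiv_class_eq_iff)
qed

lemma transfer_Id:
  fixes X :: "'a set" and b :: "nat \<Rightarrow> 'a" and ar :: "'f \<Rightarrow> nat"
  assumes wfS: "\<forall>e\<in>\<Sigma>. wf_ident ar e" and X: "Mod ar \<Sigma> X F" and b: "\<forall>i. b i \<in> X"
    and e: "e \<in> Id_of ar \<Sigma>"
  shows "eval F b (fst e) = eval F b (snd e)"
proof -
  have algX: "is_alg ar X F" using X unfolding Mod_def by auto
  define W where "W = {t :: ('f, nat) trm. wf_trm ar t}"
  define h where "h = eval F b"
  define S' where "S' = h ` W"
  define \<iota> where "\<iota> = inv_into W h"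
  define B where "B = \<iota> ` S'"
  define G where "G f ts = \<iota> (F f (map h ts))" for f ts
  have S'X: "S' \<subseteq> X" using eval_closed[OF algX b] by (auto simp: S'_def W_def h_def)
  have iW: "\<iota> x \<in> W" and hi: "h (\<iota> x) = x" if "x \<in> S'" for x
    using that by (auto simp: \<iota>_def S'_def intro: inv_into_into f_inv_into_f)
  have injS: "inj_on \<iota> S'" unfolding \<iota>_def S'_def by (rule inj_on_inv_into) simp
  have BW: "B \<subseteq> W" using iW by (auto simp: B_def)
  have hB: "h t \<in> S'" if "t \<in> B" for t
    using that hi by (auto simp: B_def)
  have evsub: "eval F (\<lambda>i. h (c i)) t = h (subst c t)" for c :: "nat \<Rightarrow> ('f, nat) trm" and t :: "('f, nat) trm"
    by (simp add: h_def eval_subst)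
  have evG: "eval G c t = \<iota> (eval F (\<lambda>i. h (c i)) t)" if c: "\<forall>i. c i \<in> B" and "wf_trm ar t" for c :: "nat \<Rightarrow> ('f, nat) trm" and t :: "('f, nat) trm"
    using that(2)
  proof (induction t)
    case (Var x)
    have "c x \<in> B" using c by auto
    then have "\<iota> (h (c x)) = c x" using hi by (auto simp: B_def)
    then show ?case by simp
  next
    case (App f ts)
    have "map (eval G c) ts = map (\<lambda>t. \<iota> (eval F (\<lambda>i. h (c i)) t)) ts"
      using App by (auto intro: map_cong)
    moreover have "h (\<iota> (eval F (\<lambda>i. h (c i)) t)) = eval F (\<lambda>i. h (c i)) t" if "t \<in> set ts" for t
    proof -
      have "subst c t \<in> W" using App.prems that c BW wf_subst by (fastforce simp: W_def)
      then show ?thesis using hi evsub S'_def by auto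
    qed
    ultimately have mm: "map h (map (eval G c) ts) = map (eval F (\<lambda>i. h (c i))) ts" by simp
    have "eval G c (App f ts) = \<iota> (F f (map h (map (eval G c) ts)))" by (simp add: G_def)
    also have "\<dots> = \<iota> (F f (map (eval F (\<lambda>i. h (c i))) ts))" by (simp only: mm)
    finally show ?case by simp
  qed
  have Bne: "B \<noteq> {}"
  proof -
    have "Var 0 \<in> W" by (simp add: W_def)
    then show ?thesis by (auto simp: B_def S'_def)
  qed
  have algB: "is_alg ar B G"
    unfolding is_alg_def
  proof (intro conjI allI impI Bne)
    fix f xs assume xs: "length xs = ar f \<and> set xs \<subseteq> B"
    then have "App f xs \<in> W" using BW by (auto simp: W_def)
    moreover have "F f (map h xs) = h (App f xs)" by (simp add: h_def)
    ultimately show "G f xs \<in> B" by (auto simp: G_def B_def S'_def)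
  qed
  have satB: "satisfies B G e'" if "e' \<in> \<Sigma>" for e'
    unfolding satisfies_def
  proof (intro allI impI)
    fix c :: "nat \<Rightarrow> _" assume c: "\<forall>i. c i \<in> B"
    have wfe: "wf_trm ar (fst e')" "wf_trm ar (snd e')" using wfS that by (auto simp: wf_ident_def)
    have "\<forall>i. h (c i) \<in> X" using c hB S'X by auto
    then have "eval F (\<lambda>i. h (c i)) (fst e') = eval F (\<lambda>i. h (c i)) (snd e')"
      using X that unfolding Mod_def satisfies_def by auto
    then show "eval G c (fst e') = eval G c (snd e')" using evG[OF c wfe(1)] evG[OF c wfe(2)] by simp
  qed
  have "Mod ar \<Sigma> B G" using algB satB by (simp add: Mod_def)
  then have satE: "satisfies B G e" using e unfolding Id_of_def by auto
  have wfE: "wf_trm ar (fst e)" "wf_trm ar (snd e)" using e by (auto simp: Id_of_def wf_ident_def)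
  define c where "c i = \<iota> (b i)" for i
  have bS: "b i \<in> S'" for i
  proof -
    have "Var i \<in> W" by (simp add: W_def)
    then show ?thesis by (force simp: S'_def h_def)
  qed
  have cB: "\<forall>i. c i \<in> B" using bS by (auto simp: c_def B_def)
  have hc: "(\<lambda>i. h (c i)) = b" using bS hi by (auto simp: c_def)
  have "eval G c (fst e) = eval G c (snd e)" using satE cB unfolding satisfies_def by auto
  then have "\<iota> (eval F b (fst e)) = \<iota> (eval F b (snd e))"
    using evG[OF cB wfE(1)] evG[OF cB wfE(2)] hc by simp
  moreover have "eval F b (fst e) \<in> S'" "eval F b (snd e) \<in> S'"
    using wfE by (auto simp: S'_def W_def h_def)
  ultimately show ?thesis using injS by (auto dest: inj_onD)
qed

lemma part1:
  fixes ar :: "'f \<Rightarrow> nat" and A :: "'a set"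
  assumes pl: "plural ar" and wfS: "\<forall>e \<in> \<Sigma>. wf_ident ar e" and VoS: "in_VoS ar \<Sigma> A F"
  shows "in_Vp ar \<Sigma> A F"
proof -
  have alg: "is_alg ar A F" using VoS unfolding in_VoS_def by auto
  obtain \<theta> where cg: "congruence ar A F \<theta>" and S: "in_S ar (A // \<theta>) (quot_ops F \<theta>)"
    and cls: "\<forall>X \<in> A // \<theta>. Mod ar \<Sigma> X F"
    using VoS unfolding in_VoS_def by auto
  have eq: "equiv A \<theta>" using cg unfolding congruence_def by auto
  have "satisfies A F e'" if ein: "e' \<in> prolong_set ar (Id_of ar \<Sigma>)" for e'
  proof -
    obtain u v m s where e: "(u, v) \<in> Id_of ar \<Sigma>" and m: "1 \<le> m"
      and e': "e' = (subst s u, subst s v)"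
      and sT: "\<forall>y \<in> vars u \<union> vars v. s y \<in> T ar m"
    proof -
      obtain e0 m where "e0 \<in> Id_of ar \<Sigma>" "1 \<le> m" "e' \<in> prolong_m ar m e0"
        using ein unfolding prolong_set_def prolong_def by auto
      then show ?thesis using that unfolding prolong_m_def by (cases e0) auto
    qed
    have wfu: "wf_trm ar u" "wf_trm ar v" using e by (auto simp: Id_of_def wf_ident_def)
    obtain y0 where y0: "y0 \<in> vars u" using vars_nonempty[OF pl wfu(1)] by auto
    show ?thesis unfolding satisfies_def
    proof (intro allI impI)
      fix a :: "nat \<Rightarrow> 'a" assume a: "\<forall>i. a i \<in> A"
      define b where "b i = (if i \<in> vars u \<union> vars v then eval F a (s i) else eval F a (s y0))" for i
      define X where "X = \<theta>``{eval F a (s y0)}"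
      have s0: "s y0 \<in> T ar m" using sT y0 by auto
      have sy: "wf_trm ar (s y0)" using s0 by (simp add: T_def)
      have X: "X \<in> A // \<theta>" unfolding X_def using eval_closed[OF alg a sy] by (rule quotientI)
      have bX: "\<forall>i. b i \<in> X"
      proof
        fix i
        show "b i \<in> X"
        proof (cases "i \<in> vars u \<union> vars v")
          case True
          then have si: "s i \<in> T ar m" using sT by auto
          then have wfi: "wf_trm ar (s i)" by (simp add: T_def)
          have "wf_ident ar (s y0, s i) \<and> regular (s y0, s i)"
            using s0 si by (simp add: T_def wf_ident_def regular_def)
          then have "satisfies (A // \<theta>) (quot_ops F \<theta>) (s y0, s i)"
            using S unfolding in_S_def Mod_def by auto
          then have "(eval F a (s y0), eval F a (s i)) \<in> \<theta>"
            using quot_sat_rev[OF alg cg sy wfi _ a] by simp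
          then show ?thesis using True by (simp add: b_def X_def)
        next
          case False
          have "eval F a (s y0) \<in> A" using eval_closed[OF alg a sy] .
          then have "eval F a (s y0) \<in> X" unfolding X_def using eq equiv_class_self by metis
          then show ?thesis using False by (simp add: b_def)
        qed
      qed
      have ModX: "Mod ar \<Sigma> X F" using cls X by auto
      have "eval F b u = eval F b v" using transfer_Id[OF wfS ModX bX e] by simp
      moreover have "eval F a (subst s u) = eval F b u"
        unfolding eval_subst by (rule eval_cong) (auto simp: b_def)
      moreover have "eval F a (subst s v) = eval F b v"
        unfolding eval_subst by (rule eval_cong) (auto simp: b_def)
      ultimately show "eval F a (fst e') = eval F a (snd e')" using e' by simp
    qed
  qed
  then show ?thesis using alg unfolding in_Vp_def Mod_def by auto
qed

inductive eqv :: "('f \<Rightarrow> nat) \<Rightarrow> 'f ident set \<Rightarrow> ('f, nat) trm \<Rightarrow> ('f, nat) trm \<Rightarrow> bool"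
  for ar P where
  eq_base: "(u, v) \<in> P \<Longrightarrow> eqv ar P u v"
| eq_refl: "eqv ar P t t"
| eq_sym: "eqv ar P u v \<Longrightarrow> eqv ar P v u"
| eq_trans: "eqv ar P u v \<Longrightarrow> eqv ar P v w \<Longrightarrow> eqv ar P u w"
| eq_app: "list_all2 (eqv ar P) ts ts' \<Longrightarrow> eqv ar P (App f ts) (App f ts')"
| eq_sub: "eqv ar P u v \<Longrightarrow> \<forall>i. wf_trm ar (\<sigma> i) \<Longrightarrow> eqv ar P (subst \<sigma> u) (subst \<sigma> v)"

lemma eqv_sound:
  assumes M: "Mod ar P A F"
  shows "eqv ar P u v \<Longrightarrow> \<forall>i. a i \<in> A \<Longrightarrow> eval F a u = eval F a v"
proof (induction u v arbitrary: a rule: eqv.induct)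
  case (eq_base u v)
  then show ?case using M unfolding Mod_def satisfies_def by fastforce
next
  case (eq_app ts ts' f)
  have "map (eval F a) ts = map (eval F a) ts'"
    using eq_app by (auto simp: list_all2_conv_all_nth intro: nth_equalityI)
  then show ?case by simp
next
  case (eq_sub u v \<sigma>)
  have alg: "is_alg ar A F" using M unfolding Mod_def by auto
  have "\<forall>i. eval F a (\<sigma> i) \<in> A" using eval_closed[OF alg eq_sub.prems] eq_sub.hyps(2) by auto
  then show ?case using eq_sub by (simp add: eval_subst)
qed auto

lemma eqv_vars:
  assumes R: "\<forall>e\<in>P. vars (fst e) = vars (snd e)"
  shows "eqv ar P u v \<Longrightarrow> vars u = vars v"
proof (induction u v rule: eqv.induct)
  case (eq_base u v)
  then show ?case using R by fastforce
next
  case (eq_app ts ts' f)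
  then have "length ts = length ts'" "\<forall>i<length ts. vars (ts ! i) = vars (ts' ! i)"
    by (auto simp: list_all2_conv_all_nth)
  then show ?case by (auto simp: set_conv_nth)
next
  case (eq_sub u v \<sigma>)
  then show ?case by (simp add: vars_subst)
qed auto

lemma eqv_subst_cong: "(\<forall>i. eqv ar P (c i) (c' i)) \<Longrightarrow> eqv ar P (subst c t) (subst c' t)"
proof (induction t)
  case (Var x) then show ?case by simp
next
  case (App f ts)
  then have "list_all2 (eqv ar P) (map (subst c) ts) (map (subst c') ts)"
    by (auto simp: list_all2_conv_all_nth)
  then show ?case by (simp add: eq_app)
qed

lemma prolong_regular:
  assumes pl: "plural ar" and e': "e' \<in> prolong_set ar (Id_of ar \<Sigma>)"
  shows "vars (fst e') = vars (snd e')"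
proof -
  obtain e0 m where e0: "e0 \<in> Id_of ar \<Sigma>" "1 \<le> m" "e' \<in> prolong_m ar m e0"
    using e' unfolding prolong_set_def prolong_def by auto
  obtain u v where uv: "e0 = (u, v)" by (cases e0)
  obtain s where s: "e' = (subst s u, subst s v)" "\<forall>y \<in> vars u \<union> vars v. s y \<in> T ar m"
    using e0(3) unfolding prolong_m_def uv by auto
  have wf: "wf_trm ar u" "wf_trm ar v" using e0(1) uv by (auto simp: Id_of_def wf_ident_def)
  have "vars (subst s u) = {1..m}"
    using vars_nonempty[OF pl wf(1)] s(2) by (auto simp: vars_subst T_def)
  moreover have "vars (subst s v) = {1..m}"
    using vars_nonempty[OF pl wf(2)] s(2) by (auto simp: vars_subst T_def)
  ultimately show ?thesis using s(1) by simp
qed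

lemma part2:
  fixes ar :: "'f \<Rightarrow> nat" and A :: "'a set"
  assumes pl: "plural ar" and wfS: "\<forall>e \<in> \<Sigma>. wf_ident ar e"
    and hyp: "\<forall>(B :: ('f, nat) trm set) G. in_VoS ar \<Sigma> B G \<longrightarrow> Mod ar \<Gamma> B G"
    and eG: "(p, q) \<in> \<Gamma>" and wfe: "wf_ident ar (p, q)"
    and Vp: "in_Vp ar \<Sigma> A F"
  shows "satisfies A F (p, q)"
proof -
  define P where "P = prolong_set ar (Id_of ar \<Sigma>)"
  define E where "E = eqv ar P"
  have Ereg: "\<forall>e\<in>P. vars (fst e) = vars (snd e)"
    using prolong_regular[OF pl] by (auto simp: P_def)
  have Evars: "E u v \<Longrightarrow> vars u = vars v" for u v
    using eqv_vars[OF Ereg] by (auto simp: E_def)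
  have Esym: "E u v \<Longrightarrow> E v u" for u v by (simp add: E_def eq_sym)
  have Etrans: "E u v \<Longrightarrow> E v w \<Longrightarrow> E u w" for u v w unfolding E_def by (rule eq_trans)
  define rep where "rep t = (SOME t'. E t' t \<and> wf_trm ar t')" for t
  define B where "B = rep ` {t. wf_trm ar t}"
  define G where "G f ts = rep (App f ts)" for f ts
  have R1: "E (rep t) t \<and> wf_trm ar (rep t)" if "wf_trm ar t" for t
  proof -
    have "E t t \<and> wf_trm ar t" using that by (simp add: E_def eq_refl)
    then show ?thesis unfolding rep_def by (rule someI)
  qed
  have R2: "rep t = rep t'" if "E t t'" for t t'
  proof -
    have "(\<lambda>x. E x t \<and> wf_trm ar x) = (\<lambda>x. E x t' \<and> wf_trm ar x)"
      using that Esym Etrans by blast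
    then show ?thesis unfolding rep_def by simp
  qed
  have R3: "rep x = x \<and> wf_trm ar x" if "x \<in> B" for x
  proof -
    obtain t where t: "wf_trm ar t" "x = rep t" using \<open>x \<in> B\<close> by (auto simp: B_def)
    then show ?thesis using R1[OF t(1)] R2 by auto
  qed
  have repB: "rep t \<in> B" if "wf_trm ar t" for t using that by (auto simp: B_def)
  have Beq: "x = y" if "x \<in> B" "y \<in> B" "E x y" for x y
    using R2[OF that(3)] R3 that by metis
  have vrep: "vars (rep t) = vars t" if "wf_trm ar t" for t using R1[OF that] Evars by auto
  have wfB: "wf_trm ar x" if "x \<in> B" for x using R3[OF that] by simp
  have evB: "eval G c t \<in> B \<and> E (eval G c t) (subst c t)"
    if c: "\<forall>i. c i \<in> B" and "wf_trm ar t" for c t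
    using that(2)
  proof (induction t)
    case (Var x)
    then show ?case using c by (simp add: E_def eq_refl)
  next
    case (App f ts)
    have ih: "eval G c t \<in> B \<and> E (eval G c t) (subst c t)" if "t \<in> set ts" for t
      using App that by auto
    have wfa: "wf_trm ar (App f (map (eval G c) ts))" using App.prems ih wfB by auto
    have "list_all2 E (map (eval G c) ts) (map (subst c) ts)"
      using ih by (auto simp: list_all2_conv_all_nth)
    then have "E (App f (map (eval G c) ts)) (App f (map (subst c) ts))"
      by (simp add: E_def eq_app)
    then have "E (eval G c (App f ts)) (subst c (App f ts))"
      using R1[OF wfa] Etrans by (simp add: G_def) blast
    moreover have "eval G c (App f ts) \<in> B" using repB[OF wfa] by (simp add: G_def)
    ultimately show ?case by simp
  qed
  have Bne: "B \<noteq> {}" using repB[of "Var 0"] by auto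
  have algB: "is_alg ar B G"
    unfolding is_alg_def
  proof (intro conjI allI impI Bne)
    fix f xs assume "length xs = ar f \<and> set xs \<subseteq> B"
    then have "wf_trm ar (App f xs)" using wfB by auto
    then show "G f xs \<in> B" unfolding G_def by (rule repB)
  qed
  define \<theta> where "\<theta> = {(x, y). x \<in> B \<and> y \<in> B \<and> vars x = vars y}"
  have eq: "equiv B \<theta>" unfolding \<theta>_def equiv_def refl_on_def sym_def trans_def by auto
  have vG: "vars (G f xs) = (\<Union>x\<in>set xs. vars x)" if "length xs = ar f" "set xs \<subseteq> B" for f xs
  proof -
    have "wf_trm ar (App f xs)" using that wfB by auto
    then show ?thesis using vrep by (simp add: G_def)
  qed
  have cg: "congruence ar B G \<theta>"
    unfolding congruence_def
  proof (intro conjI eq allI impI)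
    fix f xs ys
    assume H: "length xs = ar f \<and> length ys = ar f \<and> set xs \<subseteq> B \<and> set ys \<subseteq> B \<and>
        (\<forall>i<ar f. (xs ! i, ys ! i) \<in> \<theta>)"
    have "(\<Union>x\<in>set xs. vars x) = (\<Union>x\<in>set ys. vars x)"
      using H by (auto simp: set_conv_nth \<theta>_def)
    moreover have "G f xs \<in> B" "G f ys \<in> B" using algB H unfolding is_alg_def by auto
    ultimately show "(G f xs, G f ys) \<in> \<theta>" using vG H by (auto simp: \<theta>_def)
  qed
  have inS: "in_S ar (B // \<theta>) (quot_ops G \<theta>)"
    unfolding in_S_def Mod_def
  proof (intro conjI ballI quot_alg[OF algB cg])
    fix e assume e: "e \<in> {e. wf_ident ar e \<and> regular e}"
    obtain u v where uv: "e = (u, v)" by (cases e)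
    have wf: "wf_trm ar u" "wf_trm ar v" and rg: "vars u = vars v"
      using e uv by (auto simp: wf_ident_def regular_def)
    have "(eval G a u, eval G a v) \<in> \<theta>" if a: "\<forall>i. a i \<in> B" for a
    proof -
      have "vars (eval G a u) = vars (subst a u)" using evB[OF a wf(1)] Evars by auto
      moreover have "vars (eval G a v) = vars (subst a v)" using evB[OF a wf(2)] Evars by auto
      ultimately show ?thesis using evB[OF a wf(1)] evB[OF a wf(2)] rg
        by (auto simp: \<theta>_def vars_subst)
    qed
    then show "satisfies (B // \<theta>) (quot_ops G \<theta>) e"
      unfolding uv by (rule quot_sat[OF algB cg wf])
  qed
  have cls: "Mod ar \<Sigma> X G" if X: "X \<in> B // \<theta>" for X
  proof -
    obtain t0 where t0: "t0 \<in> B" "X = \<theta>``{t0}" using X by (auto elim!: quotientE)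
    define Y where "Y = vars t0"
    have Xeq: "X = {t \<in> B. vars t = Y}" using t0 by (auto simp: \<theta>_def Y_def)
    have Yfin: "finite Y" by (simp add: Y_def finite_vars)
    have Yne: "Y \<noteq> {}" using vars_nonempty[OF pl wfB[OF t0(1)]] by (simp add: Y_def)
    have algX: "is_alg ar X G"
      unfolding is_alg_def
    proof (intro conjI allI impI)
      show "X \<noteq> {}" using t0 Xeq Y_def by auto
      fix f xs assume H: "length xs = ar f \<and> set xs \<subseteq> X"
      have "xs \<noteq> []" using H pl unfolding plural_def by (metis le_zero_eq list.size(3) one_neq_zero)
      then obtain x0 where "x0 \<in> set xs" by (cases xs) auto
      then have "(\<Union>x\<in>set xs. vars x) = Y" using H Xeq by auto
      moreover have "G f xs \<in> B" using algB H Xeq unfolding is_alg_def by auto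
      ultimately show "G f xs \<in> X" using vG H Xeq by auto
    qed
    define m where "m = card Y"
    have m1: "1 \<le> m" using Yfin Yne by (simp add: m_def Suc_le_eq card_gt_0_iff)
    obtain \<pi> where \<pi>: "bij_betw \<pi> Y {1..m}"
      using bij_betw_iff_card[OF Yfin, of "{1..m}"] by (auto simp: m_def)
    define \<psi> where "\<psi> = the_inv_into Y \<pi>"
    have \<psi>\<pi>: "\<psi> (\<pi> x) = x" if "x \<in> Y" for x
      using \<pi> that unfolding \<psi>_def bij_betw_def by (auto intro: the_inv_into_f_f)
    have "satisfies X G e" if e: "e \<in> \<Sigma>" for e
      unfolding satisfies_def
    proof (intro allI impI)
      fix c :: "nat \<Rightarrow> ('f, nat) trm" assume c: "\<forall>i. c i \<in> X"
      obtain u v where uv: "e = (u, v)" by (cases e)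
      have wf: "wf_trm ar u" "wf_trm ar v" using wfS e uv by (auto simp: wf_ident_def)
      have cB: "\<forall>i. c i \<in> B" and cY: "\<forall>i. vars (c i) = Y" using c Xeq by auto
      define d where "d i = subst (\<lambda>x. Var (\<pi> x)) (c i)" for i
      have dT: "d i \<in> T ar m" for i
      proof -
        have "wf_trm ar (d i)" unfolding d_def using wfB cB by (auto intro: wf_subst)
        moreover have "vars (d i) = \<pi> ` Y" using cY by (auto simp: d_def vars_subst)
        ultimately show ?thesis using \<pi> by (simp add: T_def bij_betw_def)
      qed
      have "(u, v) \<in> Id_of ar \<Sigma>"
        using wfS e uv unfolding Id_of_def Mod_def by auto
      moreover have "(subst d u, subst d v) \<in> prolong_m ar m (u, v)"
        unfolding prolong_m_def using dT by auto
      ultimately have "(subst d u, subst d v) \<in> P"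
        unfolding P_def prolong_set_def prolong_def using m1 by blast
      then have "E (subst d u) (subst d v)" by (simp add: E_def eq_base)
      then have "E (subst (\<lambda>j. Var (\<psi> j)) (subst d u)) (subst (\<lambda>j. Var (\<psi> j)) (subst d v))"
        unfolding E_def by (rule eq_sub) simp
      moreover have "(\<lambda>i. subst (\<lambda>j. Var (\<psi> j)) (d i)) = c"
      proof
        fix i
        have "subst (\<lambda>j. Var (\<psi> j)) (d i) = subst (\<lambda>x. Var (\<psi> (\<pi> x))) (c i)"
          by (simp add: d_def subst_subst)
        also have "\<dots> = subst Var (c i)" using cY \<psi>\<pi> by (intro subst_cong) auto
        finally show "subst (\<lambda>j. Var (\<psi> j)) (d i) = c i" by (simp add: subst_Var)
      qed
      ultimately have "E (subst c u) (subst c v)" by (simp add: subst_subst)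
      then have "E (eval G c u) (eval G c v)"
        using evB[OF cB wf(1)] evB[OF cB wf(2)] Esym Etrans by blast
      then show "eval G c (fst e) = eval G c (snd e)"
        using Beq evB[OF cB wf(1)] evB[OF cB wf(2)] uv by auto
    qed
    then show ?thesis using algX by (simp add: Mod_def)
  qed
  have "in_VoS ar \<Sigma> B G"
    unfolding in_VoS_def using algB cg inS cls by blast
  then have "Mod ar \<Gamma> B G" using hyp by blast
  then have satB: "satisfies B G (p, q)" using eG unfolding Mod_def by auto
  define c where "c i = rep (Var i)" for i
  have cB: "\<forall>i. c i \<in> B" using repB by (simp add: c_def)
  have wf: "wf_trm ar p" "wf_trm ar q" using wfe by (auto simp: wf_ident_def)
  have "eval G c p = eval G c q" using satB cB unfolding satisfies_def by auto
  then have "E (subst c p) (subst c q)" using evB[OF cB wf(1)] evB[OF cB wf(2)] Esym Etrans by metis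
  moreover have "E (subst c t) t" for t
  proof -
    have "\<forall>i. E (c i) (Var i)" using R1 by (simp add: c_def)
    then have "E (subst c t) (subst Var t)" unfolding E_def by (rule eqv_subst_cong)
    then show ?thesis by (simp add: subst_Var)
  qed
  ultimately have "E p q" using Esym Etrans by metis
  moreover have M: "Mod ar P A F" using Vp by (simp add: in_Vp_def P_def)
  ultimately show ?thesis
    using eqv_sound[OF M] unfolding satisfies_def E_def by auto
qed

theorem corollary3p4:
  fixes ar :: "'f \<Rightarrow> nat" and \<Sigma> :: "'f ident set"
  assumes "plural ar"
    and "\<forall>e \<in> \<Sigma>. wf_ident ar e"
  shows "(\<forall>(A :: 'a set) F. in_VoS ar \<Sigma> A F \<longrightarrow> in_Vp ar \<Sigma> A F)
       \<and> (\<forall>\<Gamma>. (\<forall>e \<in> \<Gamma>. wf_ident ar e) \<longrightarrow>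
             (\<forall>(B :: ('f, nat) trm set) G. in_VoS ar \<Sigma> B G \<longrightarrow> Mod ar \<Gamma> B G) \<longrightarrow>
             (\<forall>(A :: 'a set) F. in_Vp ar \<Sigma> A F \<longrightarrow> Mod ar \<Gamma> A F))"
proof (intro conjI allI impI)
  fix A :: "'a set" and F
  assume "in_VoS ar \<Sigma> A F"
  then show "in_Vp ar \<Sigma> A F" using part1 assms by blast
next
  fix \<Gamma> :: "'f ident set" and A :: "'a set" and F
  assume wfG: "\<forall>e \<in> \<Gamma>. wf_ident ar e"
    and hyp: "\<forall>(B :: ('f, nat) trm set) G. in_VoS ar \<Sigma> B G \<longrightarrow> Mod ar \<Gamma> B G"
    and Vp: "in_Vp ar \<Sigma> A F"
  have "satisfies A F e" if "e \<in> \<Gamma>" for e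
    using part2[OF assms hyp _ _ Vp, of "fst e" "snd e"] that wfG by auto
  moreover have "is_alg ar A F" using Vp unfolding in_Vp_def Mod_def by auto
  ultimately show "Mod ar \<Gamma> A F" by (simp add: Mod_def)
qed

end
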